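(* Let $\mathcal{W}$ be a finite vocabulary and suppose text $w_{1:n}$ is fully generated by the Gumbel-max watermarked model, so that for each $t$, conditionally on $\mathbf{P}_t$, the pivotal statistic $Y_t$ has distribution $\mu_{1,\mathbf{P}_t}$. Let $T_n^{\mathrm{ars}}=\sum_{t=1}^n h_{\mathrm{ars}}(Y_t)$ with $h_{\mathrm{ars}}(y)=-\log(1-y)$. Then $$n+\sum_{t=1}^n\mathbb{E}_1\mathrm{Ent}(\mathbf{P}_t)\ \ge\ \mathbb{E}_1T_n^{\mathrm{ars}}\ \ge\ n+\Big(\frac{\pi^2}{6}-1\Big)\sum_{t=1}^n\mathbb{E}_1\mathrm{Ent}(\mathbf{P}_t),$$ where $\mathbb{E}_1$ is the expectation under this watermarked generation (including over the random $\mathbf{P}_1,\dots,\mathbf{P}_n$).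
   Context: For a probability vector $\mathbf{P}=(P_w)_{w\in\mathcal{W}}$, $\mu_{1,\mathbf{P}}$ is the distribution on $[0,1]$ with CDF $F_{1,\mathbf{P}}(r)=\sum_w P_w r^{1/P_w}$ (terms with $P_w=0$ are $0$), and $\mathrm{Ent}(\mathbf{P})=-\sum_w P_w\log P_w$ is the Shannon entropy (natural logarithm). In the Gumbel-max scheme, at step $t$ the next-token distribution is $\mathbf{P}_t$, $\xi_t=(U_{t,w})_w$ has i.i.d. $U(0,1)$ entries independent of the past, the token is $w_t=\arg\max_w \frac{\log U_{t,w}}{P_{t,w}}$, and $Y_t=U_{t,w_t}$. *)

theory Defs
  imports "HOL-Probability.Probability"
begin

text \<open>CDF of mu_{1,P}: F(r) = sum_w P_w r^(1/P_w) on [0,1], extended by 0 below 0 and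
  1 above 1 (terms with P_w = 0 are 0).\<close>
definition F1 :: "('w::finite \<Rightarrow> real) \<Rightarrow> real \<Rightarrow> real" where
  "F1 P r = (if r < 0 then 0 else if 1 \<le> r then 1
             else (\<Sum>w\<in>UNIV. if P w = 0 then 0 else P w * r powr (1 / P w)))"

definition mu1 :: "('w::finite \<Rightarrow> real) \<Rightarrow> real measure" where
  "mu1 P = interval_measure (F1 P)"

definition Ent :: "('w::finite \<Rightarrow> real) \<Rightarrow> real" where
  "Ent P = - (\<Sum>w\<in>UNIV. if P w = 0 then 0 else P w * ln (P w))"

definition prob_vector :: "('w::finite \<Rightarrow> real) \<Rightarrow> bool" where
  "prob_vector P \<longleftrightarrow> (\<forall>w. 0 \<le> P w) \<and> (\<Sum>w\<in>UNIV. P w) = 1"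

definition h_ars :: "real \<Rightarrow> real" where
  "h_ars y = - ln (1 - y)"

end

theory Submission
  imports Defs
begin


lemma c_sums: "(\<lambda>k. 1 / (real k + 2)\<^sup>2) sums (pi\<^sup>2 / 6 - 1)"
proof -
  have "(\<lambda>n. 1 / (real n + 1)\<^sup>2) sums (pi\<^sup>2 / 6)" using inverse_squares_sums by (simp add: add.commute)
  then have "(\<lambda>n. 1 / (real (Suc n) + 1)\<^sup>2) sums (pi\<^sup>2 / 6 - 1 / (real 0 + 1)\<^sup>2)"
    by (subst sums_Suc_iff) simp_all
  then show ?thesis by (simp add: add.commute add.left_commute)
qed

definition B :: "real \<Rightarrow> real" where "B x = x / (exp x - 1)"

lemma B_sums: assumes "x > 0" shows "(\<lambda>k. x * exp (- ((real k + 1) * x))) sums B x"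
proof -
  have q: "norm (exp (-x)) < 1" using assms by simp
  have "(\<lambda>k. exp (-x) ^ k) sums (1 / (1 - exp (-x)))" using geometric_sums[OF q] by simp
  then have "(\<lambda>k. (x * exp (-x)) * exp (-x) ^ k) sums ((x * exp (-x)) * (1 / (1 - exp (-x))))"
    by (rule sums_mult)
  moreover have "(x * exp (-x)) * exp (-x) ^ k = x * exp (- ((real k + 1) * x))" for k
    by (simp add: exp_of_nat_mult[symmetric] exp_add[symmetric] algebra_simps)
  moreover have "(x * exp (-x)) * (1 / (1 - exp (-x))) = B x"
  proof -
    have "exp x > 1" using assms by simp
    then show ?thesis unfolding B_def by (simp add: exp_minus field_simps)
  qed
  ultimately show ?thesis by simp
qed

lemma B_mono: assumes "0 < x" "x \<le> y" shows "B y \<le> B x"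
proof -
  define d where "d = y - x"
  have y: "y = x + d" and d: "d \<ge> 0" using assms by (simp_all add: d_def)
  have h1: "exp d \<ge> 1 + d" by (rule exp_ge_add_one_self)
  have h2: "exp x * (1 - x) \<le> 1"
  proof -
    have "exp (-x) \<ge> 1 - x" using exp_ge_add_one_self[of "-x"] by simp
    then have "exp x * (1 - x) \<le> exp x * exp (-x)" by (simp add: mult_left_mono)
    then show ?thesis by (simp add: exp_minus)
  qed
  have ex: "exp x > 1" "exp y > 1" using assms by auto
  have p1: "x * exp x * (exp d - 1) \<ge> x * exp x * d" using h1 assms by (intro mult_left_mono) (linarith, simp)
  have p2: "d * (exp x * (1 - x)) \<le> d" using h2 d by (simp add: mult_left_le)
  have key: "y * (exp x - 1) \<le> x * (exp y - 1)"
  proof -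
    have e: "x * (exp (x + d) - 1) - (x + d) * (exp x - 1) = x * exp x * (exp d - 1) - d * (exp x - 1)"
      by (simp add: exp_add algebra_simps)
    have "x * exp x * (exp d - 1) - d * (exp x - 1) \<ge> 0"
      using p1 p2 d by (simp add: algebra_simps)
    then show ?thesis using e unfolding y by linarith
  qed
  have "exp y - 1 > 0" "exp x - 1 > 0" using ex by auto
  then show ?thesis unfolding B_def using key
    by (simp add: field_simps)
qed



definition Tr :: "real \<Rightarrow> real" where "Tr t = (\<Sum>k. 1 / (real k + 1 + t)\<^sup>2)"

lemma Tr_summable: assumes "t \<ge> 0" shows "summable (\<lambda>k. 1 / (real k + 1 + t)\<^sup>2)"
proof (rule summable_comparison_test')
  show "summable (\<lambda>n. 1 / (real n + 1)\<^sup>2)" using inverse_squares_sums by (simp add: sums_iff add.commute)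
  show "norm (1 / (real n + 1 + t)\<^sup>2) \<le> 1 / (real n + 1)\<^sup>2" for n
    using assms by (auto simp: divide_simps intro!: power_mono)
qed

lemma term_int:
  assumes t: "t > 0"
  shows "ennreal (t / (real k + 1 + t)\<^sup>2) =
    (\<integral>\<^sup>+u. ennreal (indicator {0..} u * (u / t * exp (- u) * exp (- ((real k + 1) * (u / t))))) \<partial>lborel)"
proof -
  define l where "l = (real k + 1 + t) / t"
  have l: "l > 0" using t by (simp add: l_def)
  have "(\<integral>\<^sup>+ x. ennreal (erlang_density 1 l x * x ^ 0) \<partial>lborel) = 1"
    using nn_integral_erlang_ith_moment[OF l, of 1 0] by simp
  then have E: "(\<integral>\<^sup>+ x. ennreal (erlang_density 1 l x) \<partial>lborel) = 1" by simp
  have pt: "ennreal (indicator {0..} u * (u / t * exp (- u) * exp (- ((real k + 1) * (u / t)))))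
      = ennreal (1 / (t * l\<^sup>2)) * ennreal (erlang_density 1 l u)" for u
  proof -
    have "exp (- u) * exp (- ((real k + 1) * (u / t))) = exp (- l * u)"
      using t by (simp add: l_def exp_add[symmetric] field_simps)
    then have "indicator {0..} u * (u / t * exp (- u) * exp (- ((real k + 1) * (u / t))))
        = 1 / (t * l\<^sup>2) * erlang_density 1 l u"
      using t l by (auto simp: erlang_density_def indicator_def field_simps power2_eq_square)
    then show ?thesis using t l by (simp add: ennreal_mult[symmetric] erlang_density_def)
  qed
  have "(\<integral>\<^sup>+u. ennreal (indicator {0..} u * (u / t * exp (- u) * exp (- ((real k + 1) * (u / t))))) \<partial>lborel)
      = ennreal (1 / (t * l\<^sup>2)) * (\<integral>\<^sup>+ x. ennreal (erlang_density 1 l x) \<partial>lborel)"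
    unfolding pt by (rule nn_integral_cmult) simp
  also have "\<dots> = ennreal (t / (real k + 1 + t)\<^sup>2)"
  proof -
    have q: "t * l\<^sup>2 = (real k + 1 + t)\<^sup>2 / t" using t by (simp add: l_def power_divide power2_eq_square)
    have "1 / (t * l\<^sup>2) = t / (real k + 1 + t)\<^sup>2" unfolding q by simp
    then show ?thesis unfolding E by simp
  qed
  finally show ?thesis by simp
qed

lemma T_int:
  assumes t: "t > 0"
  shows "ennreal (t * Tr t) = (\<integral>\<^sup>+u. ennreal (indicator {0..} u * (exp (- u) * B (u / t))) \<partial>lborel)"
proof -
  have s: "(\<lambda>k. t * (1 / (real k + 1 + t)\<^sup>2)) sums (t * Tr t)"
    unfolding Tr_def by (intro sums_mult summable_sums Tr_summable) (use t in simp)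
  have "ennreal (t * Tr t) = (\<Sum>k. ennreal (t / (real k + 1 + t)\<^sup>2))"
    using s t by (intro suminf_ennreal_eq[symmetric]) auto
  also have "\<dots> = (\<Sum>k. \<integral>\<^sup>+u. ennreal (indicator {0..} u * (u / t * exp (- u) * exp (- ((real k + 1) * (u / t))))) \<partial>lborel)"
    using term_int[OF t] by simp
  also have "\<dots> = (\<integral>\<^sup>+u. (\<Sum>k. ennreal (indicator {0..} u * (u / t * exp (- u) * exp (- ((real k + 1) * (u / t)))))) \<partial>lborel)"
    by (rule nn_integral_suminf[symmetric]) simp
  also have "\<dots> = (\<integral>\<^sup>+u. ennreal (indicator {0..} u * (exp (- u) * B (u / t))) \<partial>lborel)"
  proof (rule nn_integral_cong)
    fix u :: real
    show "(\<Sum>k. ennreal (indicator {0..} u * (u / t * exp (- u) * exp (- ((real k + 1) * (u / t)))))) =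
          ennreal (indicator {0..} u * (exp (- u) * B (u / t)))"
    proof (cases "u > 0")
      case True
      have "(\<lambda>k. exp (- u) * (u / t * exp (- ((real k + 1) * (u / t))))) sums (exp (- u) * B (u / t))"
        by (intro sums_mult B_sums) (use True t in simp)
      then show ?thesis using True t
        by (intro suminf_ennreal_eq) (auto simp: indicator_def mult_ac)
    next
      case False
      then show ?thesis by (cases "u = 0") (auto simp: indicator_def B_def)
    qed
  qed
  finally show ?thesis .
qed

lemma Tr1: "Tr 1 = pi\<^sup>2 / 6 - 1"
  using c_sums unfolding Tr_def by (simp add: sums_iff add.assoc)

lemma crux: assumes t: "t \<ge> 1" shows "t * Tr t \<ge> pi\<^sup>2 / 6 - 1"
proof -
  have e1: "ennreal (1 * Tr 1) = (\<integral>\<^sup>+u. ennreal (indicator {0..} u * (exp (- u) * B u)) \<partial>lborel)"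
    using T_int[OF zero_less_one] by simp
  have "ennreal (1 * Tr 1) \<le> ennreal (t * Tr t)"
    unfolding e1 T_int[of t, OF order.strict_trans2[OF zero_less_one t]]
  proof (rule nn_integral_mono)
    fix u :: real
    show "ennreal (indicator {0..} u * (exp (- u) * B u)) \<le> ennreal (indicator {0..} u * (exp (- u) * B (u / t)))"
    proof (cases "u > 0")
      case True
      have "B u \<le> B (u / t)" using True t by (intro B_mono) (auto simp: divide_simps)
      then show ?thesis using True by (auto intro!: ennreal_leI simp: indicator_def)
    next
      case False
      then show ?thesis by (cases "u = 0") (auto simp: indicator_def B_def)
    qed
  qed
  moreover have "t * Tr t \<ge> 0" unfolding Tr_def using t
    by (intro mult_nonneg_nonneg suminf_nonneg Tr_summable) auto
  ultimately show ?thesis using Tr1 by (simp add: ennreal_le_iff)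
qed



lemma inv_lim: "(\<lambda>k. 1 / (real k + t)) \<longlonglongrightarrow> 0"
proof -
  have "filterlim (\<lambda>k. t + real k) at_top sequentially"
    by (rule filterlim_tendsto_add_at_top[OF tendsto_const filterlim_real_sequentially])
  then have "filterlim (\<lambda>k. real k + t) at_top sequentially" by (simp add: add.commute)
  then show ?thesis by (intro tendsto_divide_0[OF tendsto_const] filterlim_at_top_imp_at_infinity)
qed

lemma Tr_upper: assumes t: "t > 0" shows "Tr t \<le> 1 / t"
proof -
  have tel: "(\<lambda>k. 1 / (real k + t) - 1 / (real (Suc k) + t)) sums (1 / (real 0 + t) - 0)"
  proof (rule telescope_sums')
    show "(\<lambda>k. 1 / (real k + t)) \<longlonglongrightarrow> 0" by (rule inv_lim)
  qed
  have le: "1 / (real k + 1 + t)\<^sup>2 \<le> 1 / (real k + t) - 1 / (real (Suc k) + t)" for k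
  proof -
    have "1 / (real k + t) - 1 / (real (Suc k) + t) = 1 / ((real k + t) * (real k + 1 + t))"
      using t by (simp add: field_simps)
    also have "1 / (real k + 1 + t)\<^sup>2 \<le> \<dots>"
      using t by (auto simp: power2_eq_square divide_simps intro!: mult_mono)
    finally show ?thesis .
  qed
  have "Tr t \<le> (\<Sum>k. 1 / (real k + t) - 1 / (real (Suc k) + t))"
    unfolding Tr_def using le tel Tr_summable t by (intro suminf_le) (auto simp: sums_iff)
  then show ?thesis using tel by (simp add: sums_iff)
qed

lemma term_int2:
  assumes a: "a \<ge> 1"
  shows "ennreal ((a - 1) / ((real k + 2) * (real k + 1 + a))) =
    (\<integral>\<^sup>+s. ennreal (indicator {1..a} s * (1 / (real k + 1 + s)\<^sup>2)) \<partial>lborel)"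
proof -
  have "((\<lambda>s. 1 / (real k + 1 + s)\<^sup>2) has_integral ((\<lambda>s. - 1 / (real k + 1 + s)) a - (\<lambda>s. - 1 / (real k + 1 + s)) 1)) {1..a}"
  proof (rule fundamental_theorem_of_calculus[OF a])
    fix x assume x: "x \<in> {1..a}"
    then have "real k + 1 + x \<noteq> 0" by auto
    then show "((\<lambda>s. - 1 / (real k + 1 + s)) has_vector_derivative 1 / (real k + 1 + x)\<^sup>2) (at x within {1..a})"
      by (auto intro!: derivative_eq_intros simp flip: has_real_derivative_iff_has_vector_derivative
               simp: power2_eq_square)
  qed
  moreover have "(\<lambda>s. - 1 / (real k + 1 + s)) a - (\<lambda>s. - 1 / (real k + 1 + s)) 1 = (a - 1) / ((real k + 2) * (real k + 1 + a))"
    using a by (simp add: field_simps)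
  ultimately have hi: "((\<lambda>s. 1 / (real k + 1 + s)\<^sup>2) has_integral (a - 1) / ((real k + 2) * (real k + 1 + a))) {1..a}"
    by simp
  show ?thesis
    using nn_integral_has_integral_lebesgue[OF _ hi] by simp
qed

definition Hs :: "real \<Rightarrow> real" where "Hs a = (\<Sum>k. a / ((real k + 1) * (real k + 1 + a)))"

lemma Hs_summable: assumes "a \<ge> 0" shows "summable (\<lambda>k. a / ((real k + 1) * (real k + 1 + a)))"
proof (rule summable_comparison_test')
  show "summable (\<lambda>n. a * (1 / (real n + 1)\<^sup>2))" using inverse_squares_sums
    by (intro summable_mult) (simp add: sums_iff add.commute)
  show "norm (a / ((real n + 1) * (real n + 1 + a))) \<le> a * (1 / (real n + 1)\<^sup>2)" for n
    using assms by (auto simp: divide_simps power2_eq_square intro!: mult_left_mono)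
qed

lemma Hs_minus: assumes a: "a \<ge> 1"
  shows "(\<lambda>k. (a - 1) / ((real k + 2) * (real k + 1 + a))) sums (Hs a - 1)"
proof -
  have tel: "(\<lambda>k. 1 / (real k + 1) - 1 / (real (Suc k) + 1)) sums (1 / (real 0 + 1) - 0)"
  proof (rule telescope_sums')
    show "(\<lambda>k. 1 / (real k + 1)) \<longlonglongrightarrow> 0" by (rule inv_lim)
  qed
  have "(\<lambda>k. a / ((real k + 1) * (real k + 1 + a)) - (1 / (real k + 1) - 1 / (real (Suc k) + 1))) sums (Hs a - 1)"
    using sums_diff[OF summable_sums[OF Hs_summable] tel] a unfolding Hs_def by simp
  moreover have "a / ((real k + 1) * (real k + 1 + a)) - (1 / (real k + 1) - 1 / (real (Suc k) + 1))
      = (a - 1) / ((real k + 2) * (real k + 1 + a))" for k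
  proof -
    have *: "a / (x * (x + a)) - (1 / x - 1 / (x + 1)) = (a - 1) / ((x + 1) * (x + a))" if "x > 0" for x
    proof -
      have n: "x \<noteq> 0" "x + 1 \<noteq> 0" "x + a \<noteq> 0" using that a by auto
      have "a / (x * (x + a)) - (1 / x - 1 / (x + 1)) = (a * (x+1) - (x+a)) / (x * (x + 1) * (x + a))"
        using n by (simp add: divide_simps)
      also have "a * (x+1) - (x+a) = x * (a - 1)" by (simp add: algebra_simps)
      also have "x * (a - 1) / (x * (x + 1) * (x + a)) = (a - 1) / ((x + 1) * (x + a))"
        using n by simp
      finally show ?thesis .
    qed
    show ?thesis using *[of "real k + 1"] by (simp add: add_ac)
  qed
  ultimately show ?thesis by simp
qed

lemma Hs_int: assumes a: "a \<ge> 1"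
  shows "ennreal (Hs a - 1) = (\<integral>\<^sup>+s. ennreal (indicator {1..a} s * Tr s) \<partial>lborel)"
proof -
  have "ennreal (Hs a - 1) = (\<Sum>k. ennreal ((a - 1) / ((real k + 2) * (real k + 1 + a))))"
    using Hs_minus[OF a] a by (intro suminf_ennreal_eq[symmetric]) auto
  also have "\<dots> = (\<Sum>k. \<integral>\<^sup>+s. ennreal (indicator {1..a} s * (1 / (real k + 1 + s)\<^sup>2)) \<partial>lborel)"
    using term_int2[OF a] by simp
  also have "\<dots> = (\<integral>\<^sup>+s. (\<Sum>k. ennreal (indicator {1..a} s * (1 / (real k + 1 + s)\<^sup>2))) \<partial>lborel)"
    by (rule nn_integral_suminf[symmetric]) simp
  also have "\<dots> = (\<integral>\<^sup>+s. ennreal (indicator {1..a} s * Tr s) \<partial>lborel)"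
  proof (rule nn_integral_cong)
    fix s :: real
    show "(\<Sum>k. ennreal (indicator {1..a} s * (1 / (real k + 1 + s)\<^sup>2))) = ennreal (indicator {1..a} s * Tr s)"
    proof (cases "s \<in> {1..a}")
      case True
      then have "(\<lambda>k. 1 / (real k + 1 + s)\<^sup>2) sums Tr s" unfolding Tr_def
        by (intro summable_sums Tr_summable) auto
      then show ?thesis using True by (intro suminf_ennreal_eq) auto
    qed simp
  qed
  finally show ?thesis .
qed

lemma ln_int: assumes a: "a \<ge> 1" and C: "C \<ge> 0"
  shows "(\<integral>\<^sup>+s. ennreal (indicator {1..a} s * (C / s)) \<partial>lborel) = ennreal (C * ln a)"
proof -
  have "((\<lambda>s. C / s) has_integral ((\<lambda>s. C * ln s) a - (\<lambda>s. C * ln s) 1)) {1..a}"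
  proof (rule fundamental_theorem_of_calculus[OF a])
    fix x assume x: "x \<in> {1..a}"
    then show "((\<lambda>s. C * ln s) has_vector_derivative C / x) (at x within {1..a})"
      by (auto intro!: derivative_eq_intros simp flip: has_real_derivative_iff_has_vector_derivative
               simp: field_simps)
  qed
  then have hi: "((\<lambda>s. C / s) has_integral C * ln a) {1..a}" by simp
  show ?thesis
    using nn_integral_has_integral_lebesgue[OF _ hi] C by simp
qed

abbreviation cc :: real where "cc \<equiv> pi\<^sup>2 / 6 - 1"

lemma cc_pos: "cc \<ge> 0"
proof -
  have "pi\<^sup>2 \<ge> 3\<^sup>2" using pi_gt3 by (intro power_mono) auto
  then show ?thesis by simp
qed

lemma Hs_bounds: assumes a: "a \<ge> 1"
  shows "1 + cc * ln a \<le> Hs a" "Hs a \<le> 1 + ln a"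
proof -
  have nn: "Hs a - 1 \<ge> 0"
    by (rule sums_le[OF _ sums_zero Hs_minus[OF a]]) (use a in auto)
  have "ennreal (cc * ln a) \<le> ennreal (Hs a - 1)"
    unfolding Hs_int[OF a] ln_int[OF a cc_pos, symmetric]
  proof (rule nn_integral_mono)
    fix s
    show "ennreal (indicator {1..a} s * (cc / s)) \<le> ennreal (indicator {1..a} s * Tr s)"
    proof (cases "s \<in> {1..a}")
      case True
      then have "cc \<le> s * Tr s" using crux by auto
      then have "cc / s \<le> (s * Tr s) / s" using True by (intro divide_right_mono) auto
      then have "cc / s \<le> Tr s" using True by simp
      then show ?thesis using True by (auto intro!: ennreal_leI)
    qed simp
  qed
  then show "1 + cc * ln a \<le> Hs a" using nn by (simp add: ennreal_le_iff)
  have "ennreal (Hs a - 1) \<le> ennreal (1 * ln a)"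
    unfolding Hs_int[OF a] ln_int[OF a zero_le_one, symmetric]
  proof (rule nn_integral_mono)
    fix s
    show "ennreal (indicator {1..a} s * Tr s) \<le> ennreal (indicator {1..a} s * (1 / s))"
    proof (cases "s \<in> {1..a}")
      case True
      then show ?thesis using Tr_upper[of s] by (auto intro!: ennreal_leI)
    qed simp
  qed
  then show "Hs a \<le> 1 + ln a" using a by (simp add: ennreal_le_iff)
qed



definition phit :: "real \<Rightarrow> nat \<Rightarrow> real" where
  "phit p k = p / ((real k + 1) * ((real k + 1) * p + 1))"

definition phi :: "real \<Rightarrow> real" where "phi p = (\<Sum>k. phit p k)"

lemma phi_sums: assumes "p \<ge> 0" shows "(\<lambda>k. phit p k) sums phi p"
proof (cases "p = 0")
  case True then show ?thesis by (simp add: phit_def phi_def)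
next
  case False
  then have p: "p > 0" using assms by simp
  have "(\<lambda>k. p * (1 / p / ((real k + 1) * (real k + 1 + 1 / p)))) sums (p * Hs (1 / p))"
    unfolding Hs_def by (intro sums_mult summable_sums Hs_summable) (use p in simp)
  moreover have "p * (1 / p / ((real k + 1) * (real k + 1 + 1 / p))) = phit p k" for k
  proof -
    have "(real k + 1) * p + 1 > 0" using p by (simp add: add_pos_nonneg)
    then show ?thesis using p unfolding phit_def by (simp add: field_simps)
  qed
  ultimately have "(\<lambda>k. phit p k) sums (p * Hs (1 / p))" by simp
  then show ?thesis by (simp add: phi_def sums_iff)
qed

lemma phit_nonneg: "p \<ge> 0 \<Longrightarrow> phit p k \<ge> 0"
  unfolding phit_def by (simp add: add_nonneg_nonneg)

lemma phi_Hs: assumes "p > 0" shows "phi p = p * Hs (1 / p)"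
proof -
  have "(\<lambda>k. p * (1 / p / ((real k + 1) * (real k + 1 + 1 / p)))) sums (p * Hs (1 / p))"
    unfolding Hs_def by (intro sums_mult summable_sums Hs_summable) (use assms in simp)
  moreover have "p * (1 / p / ((real k + 1) * (real k + 1 + 1 / p))) = phit p k" for k
  proof -
    have "(real k + 1) * p + 1 > 0" using assms by (simp add: add_pos_nonneg)
    then show ?thesis using assms unfolding phit_def by (simp add: field_simps)
  qed
  ultimately show ?thesis using phi_sums[of p] assms by (simp add: sums_iff)
qed

lemma phi_bounds: assumes "0 \<le> p" "p \<le> 1"
  shows "p - cc * (if p = 0 then 0 else p * ln p) \<le> phi p"
    and "phi p \<le> p - (if p = 0 then 0 else p * ln p)"
proof -
  have "(p - cc * (if p = 0 then 0 else p * ln p) \<le> phi p) \<and> (phi p \<le> p - (if p = 0 then 0 else p * ln p))"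
  proof (cases "p = 0")
    case True then show ?thesis by (simp add: phi_def phit_def)
  next
    case False
    then have p: "p > 0" using assms by simp
    have a: "1 / p \<ge> 1" using p assms by simp
    have l: "ln (1 / p) = - ln p" using p by (simp add: ln_div)
    have h1: "p * (1 + cc * ln (1 / p)) \<le> p * Hs (1 / p)"
      using Hs_bounds(1)[OF a] p by (intro mult_left_mono) auto
    have h2: "p * Hs (1 / p) \<le> p * (1 + ln (1 / p))"
      using Hs_bounds(2)[OF a] p by (intro mult_left_mono) auto
    show ?thesis using h1 h2 p unfolding phi_Hs[OF p] l by (simp add: algebra_simps)
  qed
  then show "p - cc * (if p = 0 then 0 else p * ln p) \<le> phi p"
    and "phi p \<le> p - (if p = 0 then 0 else p * ln p)" by auto
qed

definition Phi :: "('w::finite \<Rightarrow> real) \<Rightarrow> real" where "Phi P = (\<Sum>w\<in>UNIV. phi (P w))"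

lemma prob_vector_le1: "prob_vector P \<Longrightarrow> P w \<le> 1"
  unfolding prob_vector_def
  by (metis finite UNIV_I member_le_sum)

lemma Phi_bounds: assumes P: "prob_vector P"
  shows "1 + cc * Ent P \<le> Phi P" "Phi P \<le> 1 + Ent P"
proof -
  have nn: "\<And>w. 0 \<le> P w" and s1: "(\<Sum>w\<in>UNIV. P w) = 1" using P unfolding prob_vector_def by auto
  have le1: "\<And>w. P w \<le> 1" using prob_vector_le1[OF P] .
  have "(\<Sum>w\<in>UNIV. P w - cc * (if P w = 0 then 0 else P w * ln (P w))) \<le> Phi P"
    unfolding Phi_def by (intro sum_mono phi_bounds(1) nn le1)
  moreover have "(\<Sum>w\<in>UNIV. P w - cc * (if P w = 0 then 0 else P w * ln (P w))) = 1 + cc * Ent P"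
    unfolding Ent_def sum_subtractf s1 sum_distrib_left[symmetric] by simp
  ultimately show "1 + cc * Ent P \<le> Phi P" by simp
  have "Phi P \<le> (\<Sum>w\<in>UNIV. P w - (if P w = 0 then 0 else P w * ln (P w)))"
    unfolding Phi_def by (intro sum_mono phi_bounds(2) nn le1)
  moreover have "(\<Sum>w\<in>UNIV. P w - (if P w = 0 then 0 else P w * ln (P w))) = 1 + Ent P"
    unfolding Ent_def sum_subtractf s1 by simp
  ultimately show "Phi P \<le> 1 + Ent P" by simp
qed

lemma Ent_bounds: fixes P :: "'w::finite \<Rightarrow> real" assumes P: "prob_vector P" shows "0 \<le> Ent P" "Ent P \<le> real CARD('w)"
proof -
  have nn: "\<And>w. 0 \<le> P w" using P unfolding prob_vector_def by auto
  have le1: "\<And>w. P w \<le> 1" using prob_vector_le1[OF P] .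
  have t: "0 \<le> - (if P w = 0 then 0 else P w * ln (P w)) \<and> - (if P w = 0 then 0 else P w * ln (P w)) \<le> 1" for w
  proof (cases "P w = 0")
    case False
    then have p: "P w > 0" using nn[of w] by simp
    have "ln (P w) \<le> 0" using p le1[of w] by simp
    moreover have "- ln (P w) \<le> 1 / P w"
    proof -
      have "ln (1 / P w) \<le> 1 / P w - 1" using p by (intro ln_le_minus_one) simp
      then show ?thesis using p by (simp add: ln_div)
    qed
    ultimately have a1: "P w * ln (P w) \<le> 0" and a2: "P w * (- ln (P w)) \<le> P w * (1 / P w)"
      using p by (simp add: mult_nonneg_nonpos, intro mult_left_mono, simp_all)
    then show ?thesis using p False by simp
  qed simp
  have "Ent P = (\<Sum>w\<in>UNIV. - (if P w = 0 then 0 else P w * ln (P w)))"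
    unfolding Ent_def by (simp add: sum_negf)
  then show "0 \<le> Ent P" "Ent P \<le> real CARD('w)"
    using sum_nonneg[of UNIV "\<lambda>w. - (if P w = 0 then 0 else P w * ln (P w))"]
          sum_mono[of UNIV "\<lambda>w. - (if P w = 0 then 0 else P w * ln (P w))" "\<lambda>_. 1"] t by auto
qed

lemma Phi_sums: assumes P: "prob_vector P"
  shows "(\<lambda>k. \<Sum>w\<in>UNIV. phit (P w) k) sums Phi P"
  unfolding Phi_def using P unfolding prob_vector_def by (intro sums_sum phi_sums) auto



lemma h_sums: assumes "0 \<le> y" "y < 1"
  shows "(\<lambda>k. y ^ (Suc k) / real (Suc k)) sums h_ars y"
proof -
  have "(\<lambda>n. - ((- (- y))^n) / of_nat n) sums ln (1 + - y)" using assms by (intro ln_series') auto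
  then have "(\<lambda>n. - (- (y^n) / real n)) sums (- ln (1 - y))" by (intro sums_minus) simp
  then have "(\<lambda>n. y^n / real n) sums h_ars y" by (simp add: h_ars_def)
  then show ?thesis by (subst sums_Suc_iff) simp
qed

lemma layer_cake:
  assumes M: "sigma_finite_measure M" and f: "f \<in> borel_measurable M" and nn: "\<And>x. 0 \<le> f x"
  shows "(\<integral>\<^sup>+x. ennreal (f x) \<partial>M) = (\<integral>\<^sup>+s. indicator {0<..} s * emeasure M {x\<in>space M. s < f x} \<partial>lborel)"
proof -
  note f[measurable]
  interpret pair_sigma_finite M lborel
    using M by (intro pair_sigma_finite.intro) (auto simp: lborel.sigma_finite_measure_axioms)
  have meas: "(\<lambda>(x, s). indicator {0<..<f x} s :: ennreal) \<in> borel_measurable (M \<Otimes>\<^sub>M lborel)"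
    unfolding indicator_def greaterThanLessThan_iff by measurable
  have "(\<integral>\<^sup>+x. ennreal (f x) \<partial>M) = (\<integral>\<^sup>+x. (\<integral>\<^sup>+s. indicator {0<..<f x} s \<partial>lborel) \<partial>M)"
    using nn by (intro nn_integral_cong) simp
  also have "\<dots> = (\<integral>\<^sup>+s. (\<integral>\<^sup>+x. indicator {0<..<f x} s \<partial>M) \<partial>lborel)"
    using Fubini'[OF meas] by simp
  also have "\<dots> = (\<integral>\<^sup>+s. indicator {0<..} s * emeasure M {x\<in>space M. s < f x} \<partial>lborel)"
  proof (rule nn_integral_cong)
    fix s :: real
    have "(\<integral>\<^sup>+x. indicator {0<..<f x} s \<partial>M) = (\<integral>\<^sup>+x. indicator {0<..} s * indicator {x\<in>space M. s < f x} x \<partial>M)"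
      by (intro nn_integral_cong) (auto simp: indicator_def)
    also have "\<dots> = indicator {0<..} s * emeasure M {x\<in>space M. s < f x}"
      using f by (intro nn_integral_cmult_indicator) measurable
    finally show "(\<integral>\<^sup>+x. indicator {0<..<f x} s \<partial>M) = indicator {0<..} s * emeasure M {x\<in>space M. s < f x}" .
  qed
  finally show ?thesis .
qed

lemma F1_meas: "(\<lambda>(Q, r). F1 Q r) \<in> borel_measurable ((\<Pi>\<^sub>M w\<in>UNIV. borel) \<Otimes>\<^sub>M borel)"
  unfolding F1_def by measurable

lemma Ent_meas: "Ent \<in> borel_measurable (\<Pi>\<^sub>M w\<in>UNIV. borel)"
  unfolding Ent_def by measurable



definition G1 :: "('w::finite \<Rightarrow> real) \<Rightarrow> real \<Rightarrow> real" where
  "G1 P r = (\<Sum>w\<in>UNIV. if P w = 0 then 0 else P w * r powr (1 / P w))"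

lemma pv_nonneg: "prob_vector P \<Longrightarrow> 0 \<le> P w" unfolding prob_vector_def by auto

lemma F1_G1: assumes P: "prob_vector P" shows "F1 P r = G1 P (max 0 (min 1 r))"
proof -
  have "G1 P 1 = 1"
  proof -
    have "G1 P 1 = (\<Sum>w\<in>UNIV. P w)" unfolding G1_def by (intro sum.cong) auto
    then show ?thesis using P unfolding prob_vector_def by simp
  qed
  moreover have "G1 P 0 = 0" unfolding G1_def by (intro sum.neutral) simp
  ultimately show ?thesis unfolding F1_def G1_def[symmetric] by auto
qed

lemma G1_cont: assumes P: "prob_vector P" shows "continuous_on {0..1} (G1 P)"
  unfolding G1_def
proof (intro continuous_on_sum)
  fix w
  show "continuous_on {0..1} (\<lambda>r. if P w = 0 then 0 else P w * r powr (1 / P w))"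
  proof (cases "P w = 0")
    case False
    then have "P w > 0" using pv_nonneg[OF P, of w] by simp
    then show ?thesis using False
      by (auto intro!: continuous_intros continuous_on_powr')
  qed simp
qed

lemma G1_mono: assumes P: "prob_vector P" "0 \<le> x" "x \<le> y" shows "G1 P x \<le> G1 P y"
  unfolding G1_def
proof (intro sum_mono)
  fix w
  show "(if P w = 0 then 0 else P w * x powr (1 / P w)) \<le> (if P w = 0 then 0 else P w * y powr (1 / P w))"
    using pv_nonneg[OF P(1), of w] P by (auto intro!: mult_left_mono powr_mono2)
qed

lemma F1_cont: assumes P: "prob_vector P" shows "continuous_on UNIV (F1 P)"
proof -
  have "continuous_on UNIV (\<lambda>r. G1 P (max 0 (min 1 r)))"
    by (rule continuous_on_compose2[OF G1_cont[OF P]]) (auto intro!: continuous_intros)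
  then show ?thesis using F1_G1[OF P] by simp
qed

lemma F1_mono: assumes P: "prob_vector P" shows "x \<le> y \<Longrightarrow> F1 P x \<le> F1 P y"
  unfolding F1_G1[OF P] by (rule G1_mono[OF P]) auto

lemma F1_rcont: assumes P: "prob_vector P" shows "continuous (at_right a) (F1 P)"
proof -
  have "isCont (F1 P) a" using F1_cont[OF P] by (simp add: continuous_on_eq_continuous_at)
  then show ?thesis by (rule continuous_at_imp_continuous_at_within)
qed

lemma mu1_Ioo: assumes P: "prob_vector P" and r: "0 \<le> r" "r < 1"
  shows "measure (mu1 P) {r<..<1} = 1 - F1 P r"
proof -
  have e1: "emeasure (mu1 P) {r<..1} = F1 P 1 - F1 P r"
    unfolding mu1_def using r F1_mono[OF P] F1_rcont[OF P] by (intro emeasure_interval_measure_Ioc) auto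
  have e2: "emeasure (mu1 P) {1..1} = F1 P 1 - F1 P 1"
    unfolding mu1_def using F1_mono[OF P] F1_cont[OF P] by (intro emeasure_interval_measure_Icc) auto
  have S: "{r<..<1} = {r<..1} - {1..1}" using r by auto
  have "emeasure (mu1 P) {r<..<1} = emeasure (mu1 P) {r<..1} - emeasure (mu1 P) {1..1}"
    unfolding S by (rule emeasure_Diff) (use e2 r in \<open>auto simp: mu1_def\<close>)
  also have "\<dots> = ennreal (1 - F1 P r)" unfolding e1 e2 by (simp add: F1_def)
  finally show ?thesis unfolding measure_def using F1_mono[OF P, of r 1] r by (simp add: F1_def)
qed

lemma inner:
  assumes P: "prob_vector P" and m: "m > 0"
  shows "(\<integral>\<^sup>+s. ennreal (indicator {0<..<1} s * (1 - F1 P (root m s))) \<partial>lborel)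
         = ennreal (\<Sum>w\<in>UNIV. P w / (real m * P w + 1))"
proof -
  define g where "g s = (\<Sum>w\<in>UNIV. if P w = 0 then 0 else P w * (1 - s powr (1 / (real m * P w))))" for s
  have hi: "(g has_integral (\<Sum>w\<in>UNIV. P w / (real m * P w + 1))) {0..1}"
    unfolding g_def
  proof (intro has_integral_sum)
    fix w
    show "((\<lambda>s. if P w = 0 then 0 else P w * (1 - s powr (1 / (real m * P w)))) has_integral P w / (real m * P w + 1)) {0..1}"
    proof (cases "P w = 0")
      case False
      then have p: "P w > 0" using pv_nonneg[OF P, of w] by simp
      define b where "b = 1 / (real m * P w)"
      have b: "b > 0" using p m by (simp add: b_def)
      have "((\<lambda>s. P w * (1 - s powr b)) has_integral P w * (1 - 1 powr (b + 1) / (b + 1))) {0..1}"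
        using b by (intro has_integral_mult_right has_integral_diff[of "\<lambda>_. 1" 1, simplified]
            has_integral_powr_from_0) (auto intro: has_integral_const_real[of 1 0 1, simplified])
      moreover have "P w * (1 - 1 powr (b + 1) / (b + 1)) = P w / (real m * P w + 1)"
      proof -
        have q1: "real m * P w + 1 > 0" "real m * P w > 0" using p m by (auto intro: add_pos_pos)
        have "b + 1 = (real m * P w + 1) / (real m * P w)" unfolding b_def using q1 p m by (simp add: add_divide_distrib)
        then have "1 - 1 powr (b + 1) / (b + 1) = 1 - (real m * P w) / (real m * P w + 1)" by simp
        also have "\<dots> = 1 / (real m * P w + 1)" using q1 by (simp add: field_simps)
        finally show ?thesis by simp
      qed
      ultimately show ?thesis using False unfolding b_def by simp
    qed simp
  qed simp
  have gnn: "0 \<le> g s" if "s \<in> {0..1}" for s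
    unfolding g_def
  proof (intro sum_nonneg)
    fix w
    have "s powr (1 / (real m * P w)) \<le> 1" if "P w > 0"
      using \<open>s \<in> {0..1}\<close> that m powr_mono2[of "1 / (real m * P w)" s 1] by simp
    then show "0 \<le> (if P w = 0 then 0 else P w * (1 - s powr (1 / (real m * P w))))"
      using pv_nonneg[OF P, of w] by (auto intro!: mult_nonneg_nonneg)
  qed
  have "(\<integral>\<^sup>+s. ennreal (indicator {0..1} s * g s) \<partial>lborel) = ennreal (\<Sum>w\<in>UNIV. P w / (real m * P w + 1))"
    using nn_integral_has_integral_lebesgue[OF gnn hi] by simp
  moreover have "(\<integral>\<^sup>+s. ennreal (indicator {0<..<1} s * (1 - F1 P (root m s))) \<partial>lborel)
      = (\<integral>\<^sup>+s. ennreal (indicator {0..1} s * g s) \<partial>lborel)"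
  proof (rule nn_integral_cong_AE)
    have "AE s in lborel. s \<noteq> 0" "AE s in lborel. s \<noteq> (1::real)" by (rule AE_lborel_singleton)+
    then show "AE s in lborel. ennreal (indicator {0<..<1} s * (1 - F1 P (root m s))) = ennreal (indicator {0..1} s * g s)"
    proof eventually_elim
      case (elim s)
      show ?case
      proof (cases "s \<in> {0<..<1}")
        case True
        then have s: "0 < s" "s < 1" by auto
        have r: "0 < root m s" "root m s < 1" using s m by (auto simp: real_root_lt_1_iff)
        have rp: "root m s powr (1 / P w) = s powr (1 / (real m * P w))" for w
          using s m by (simp add: root_powr_inverse powr_powr)
        have "1 - F1 P (root m s) = (\<Sum>w\<in>UNIV. P w) - (\<Sum>w\<in>UNIV. if P w = 0 then 0 else P w * s powr (1 / (real m * P w)))"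
          using r P unfolding F1_def prob_vector_def rp by simp
        also have "\<dots> = g s" unfolding g_def sum_subtractf[symmetric]
          by (intro sum.cong) (auto simp: algebra_simps)
        finally show ?thesis using True by (simp add: indicator_def)
      next
        case False
        then have "s \<notin> {0..1}" using elim by auto
        then show ?thesis using False by simp
      qed
    qed
  qed
  ultimately show ?thesis by simp
qed



lemma F1_range: assumes P: "prob_vector P" shows "0 \<le> F1 P r" "F1 P r \<le> 1"
proof -
  have "F1 P (min r (-1)) \<le> F1 P r" "F1 P r \<le> F1 P (max r 2)" by (intro F1_mono[OF P]; simp)+
  then show "0 \<le> F1 P r" "F1 P r \<le> 1" by (auto simp: F1_def)
qed

lemma F1_0: "F1 P 0 = 0" unfolding F1_def by (auto intro!: sum.neutral)

lemma F1_measurable[measurable (raw)]: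
  assumes "f \<in> N \<rightarrow>\<^sub>M (\<Pi>\<^sub>M w\<in>UNIV. borel)" "g \<in> borel_measurable N"
  shows "(\<lambda>x. F1 (f x) (g x)) \<in> borel_measurable N"
  using measurable_compose[OF measurable_Pair[OF assms] F1_meas] by simp

lemma Ent_measurable[measurable (raw)]:
  assumes "f \<in> N \<rightarrow>\<^sub>M (\<Pi>\<^sub>M w\<in>UNIV. borel)"
  shows "(\<lambda>x. Ent (f x)) \<in> borel_measurable N"
  using measurable_compose[OF assms Ent_meas] by simp

lemma single:
  fixes M :: "'a measure" and Q :: "'a \<Rightarrow> ('w::finite \<Rightarrow> real)" and X :: "'a \<Rightarrow> real"
  assumes PS: "prob_space M"
    and Qm: "Q \<in> M \<rightarrow>\<^sub>M (\<Pi>\<^sub>M w\<in>UNIV. borel)"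
    and Qv: "\<And>x. x \<in> space M \<Longrightarrow> prob_vector (Q x)"
    and Xm: "X \<in> borel_measurable M"
    and cond: "\<And>A. A \<in> sets borel \<Longrightarrow> measure M {x \<in> space M. X x \<in> A} = (\<integral>x. measure (mu1 (Q x)) A \<partial>M)"
  shows "integrable M (\<lambda>x. h_ars (X x))"
    and "(\<integral>x. h_ars (X x) \<partial>M) \<le> 1 + (\<integral>x. Ent (Q x) \<partial>M)"
    and "1 + cc * (\<integral>x. Ent (Q x) \<partial>M) \<le> (\<integral>x. h_ars (X x) \<partial>M)"
proof -
  interpret prob_space M by (rule PS)
  note Qm[measurable] Xm[measurable]
  have int1: "integrable M (\<lambda>x. 1 - F1 (Q x) r)" for r
  proof (rule integrable_const_bound[where B=1])
    show "AE x in M. norm (1 - F1 (Q x) r) \<le> 1"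
    proof (rule AE_I2)
      fix x assume "x \<in> space M"
      then show "norm (1 - F1 (Q x) r) \<le> 1" using F1_range[OF Qv[OF \<open>x \<in> space M\<close>], of r] by simp
    qed
  qed simp
  have meas_Ioo: "measure M {x\<in>space M. X x \<in> {r<..<1}} = (\<integral>x. 1 - F1 (Q x) r \<partial>M)"
    if r: "0 \<le> r" "r < 1" for r
    unfolding cond[OF borel_open[OF open_greaterThanLessThan]]
    by (rule Bochner_Integration.integral_cong[OF refl]) (simp add: mu1_Ioo Qv r)
  have AE01: "AE x in M. X x \<in> {0<..<1}"
  proof -
    have "prob {x\<in>space M. X x \<in> {0<..<1}} = 1"
      using meas_Ioo[of 0] by (simp add: F1_0 prob_space)
    from AE_prob_1[OF this] show ?thesis by auto
  qed
  have Entnn: "0 \<le> Ent (Q x)" "Ent (Q x) \<le> real CARD('w)" if "x \<in> space M" for x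
    using Ent_bounds[OF Qv[OF that]] by auto
  have intE: "integrable M (\<lambda>x. Ent (Q x))"
  proof (rule integrable_const_bound[where B="real CARD('w)"])
    show "AE x in M. norm (Ent (Q x)) \<le> real CARD('w)"
    proof (rule AE_I2)
      fix x assume "x \<in> space M"
      then show "norm (Ent (Q x)) \<le> real CARD('w)" using Entnn[OF \<open>x \<in> space M\<close>] by simp
    qed
  qed simp
  define Z where "Z x = (if X x \<in> {0<..<1} then X x else 0)" for x
  have Zm[measurable]: "Z \<in> borel_measurable M" unfolding Z_def by measurable
  have Z0: "0 \<le> Z x" and Z1: "Z x < 1" for x unfolding Z_def by auto
  have hZ: "(\<integral>\<^sup>+x. ennreal (h_ars (X x)) \<partial>M) = (\<integral>\<^sup>+x. ennreal (h_ars (Z x)) \<partial>M)"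
    by (rule nn_integral_cong_AE) (use AE01 in \<open>eventually_elim, simp add: Z_def\<close>)
  have ser: "(\<integral>\<^sup>+x. ennreal (h_ars (Z x)) \<partial>M) = (\<Sum>k. \<integral>\<^sup>+x. ennreal (Z x ^ Suc k / real (Suc k)) \<partial>M)"
  proof -
    have "(\<integral>\<^sup>+x. ennreal (h_ars (Z x)) \<partial>M) = (\<integral>\<^sup>+x. (\<Sum>k. ennreal (Z x ^ Suc k / real (Suc k))) \<partial>M)"
      by (intro nn_integral_cong suminf_ennreal_eq[symmetric] h_sums) (auto simp: Z0 Z1)
    also have "\<dots> = (\<Sum>k. \<integral>\<^sup>+x. ennreal (Z x ^ Suc k / real (Suc k)) \<partial>M)"
      by (rule nn_integral_suminf) measurable
    finally show ?thesis .
  qed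
  have sfM: "sigma_finite_measure M" by (rule prob_space_imp_sigma_finite[OF PS])
  interpret PSF: pair_sigma_finite M lborel
    using sfM by (intro pair_sigma_finite.intro) (auto simp: lborel.sigma_finite_measure_axioms)
  have moment: "(\<integral>\<^sup>+x. ennreal (Z x ^ m) \<partial>M) = (\<integral>\<^sup>+x. ennreal (\<Sum>w\<in>UNIV. Q x w / (real m * Q x w + 1)) \<partial>M)"
    if m: "m > 0" for m
  proof -
    have "(\<integral>\<^sup>+x. ennreal (Z x ^ m) \<partial>M) = (\<integral>\<^sup>+s. indicator {0<..} s * emeasure M {x\<in>space M. s < Z x ^ m} \<partial>lborel)"
      by (rule layer_cake[OF sfM]) (auto simp: Z0)
    also have "\<dots> = (\<integral>\<^sup>+s. (\<integral>\<^sup>+x. ennreal (indicator {0<..<1} s * (1 - F1 (Q x) (root m s))) \<partial>M) \<partial>lborel)"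
    proof (rule nn_integral_cong)
      fix s :: real
      show "indicator {0<..} s * emeasure M {x\<in>space M. s < Z x ^ m} =
            (\<integral>\<^sup>+x. ennreal (indicator {0<..<1} s * (1 - F1 (Q x) (root m s))) \<partial>M)"
      proof (cases "0 < s \<and> s < 1")
        case True
        then have s: "0 < s" "s < 1" by auto
        have rs: "0 < root m s" "root m s < 1" using s m by auto
        have set: "{x\<in>space M. s < Z x ^ m} = {x\<in>space M. X x \<in> {root m s<..<1}}"
        proof -
          have "s < Z x ^ m \<longleftrightarrow> root m s < Z x" for x
            using real_root_less_iff[OF m, of s "Z x ^ m"] real_root_power_cancel[OF m Z0[of x]] by simp
          then show ?thesis using rs unfolding Z_def by auto
        qed
        have "emeasure M {x\<in>space M. s < Z x ^ m} = ennreal (\<integral>x. 1 - F1 (Q x) (root m s) \<partial>M)"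
          unfolding set emeasure_eq_measure meas_Ioo[OF less_imp_le[OF rs(1)] rs(2)] ..
        also have "\<dots> = (\<integral>\<^sup>+x. ennreal (1 - F1 (Q x) (root m s)) \<partial>M)"
          by (rule nn_integral_eq_integral[OF int1, symmetric], rule AE_I2) (use F1_range(2)[OF Qv] in simp)
        finally show ?thesis using True by (simp add: indicator_def)
      next
        case False
        show ?thesis
        proof (cases "s \<le> 0")
          case True then show ?thesis by (simp add: indicator_def)
        next
          case F2: False
          then have s1: "s \<ge> 1" using False by auto
          have "Z x ^ m \<le> 1" for x using Z0[of x] Z1[of x] by (intro power_le_one) auto
          then have E0: "{x\<in>space M. s < Z x ^ m} = {}" using s1 by (auto simp: not_less intro: order.trans)
          show ?thesis unfolding E0 using s1 by (simp add: indicator_def)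
        qed
      qed
    qed
    also have "\<dots> = (\<integral>\<^sup>+x. (\<integral>\<^sup>+s. ennreal (indicator {0<..<1} s * (1 - F1 (Q x) (root m s))) \<partial>lborel) \<partial>M)"
      by (rule PSF.Fubini') measurable
    also have "\<dots> = (\<integral>\<^sup>+x. ennreal (\<Sum>w\<in>UNIV. Q x w / (real m * Q x w + 1)) \<partial>M)"
      by (intro nn_integral_cong inner Qv m)
    finally show ?thesis .
  qed
  have hsum: "(\<integral>\<^sup>+x. ennreal (h_ars (X x)) \<partial>M) = (\<integral>\<^sup>+x. ennreal (Phi (Q x)) \<partial>M)"
  proof -
    have "(\<integral>\<^sup>+x. ennreal (h_ars (X x)) \<partial>M) = (\<Sum>k. \<integral>\<^sup>+x. ennreal (Z x ^ Suc k / real (Suc k)) \<partial>M)"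
      using hZ ser by simp
    also have "\<dots> = (\<Sum>k. \<integral>\<^sup>+x. ennreal (\<Sum>w\<in>UNIV. phit (Q x w) k) \<partial>M)"
    proof (rule suminf_cong)
      fix k
      have "(\<integral>\<^sup>+x. ennreal (Z x ^ Suc k / real (Suc k)) \<partial>M)
          = (\<integral>\<^sup>+x. ennreal (1 / real (Suc k)) * ennreal (Z x ^ Suc k) \<partial>M)"
        by (intro nn_integral_cong) (simp add: ennreal_mult[symmetric] Z0)
      also have "\<dots> = ennreal (1 / real (Suc k)) * (\<integral>\<^sup>+x. ennreal (Z x ^ Suc k) \<partial>M)"
        by (rule nn_integral_cmult) measurable
      also have "\<dots> = ennreal (1 / real (Suc k)) * (\<integral>\<^sup>+x. ennreal (\<Sum>w\<in>UNIV. Q x w / (real (Suc k) * Q x w + 1)) \<partial>M)"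
        using moment[of "Suc k"] by simp
      also have "\<dots> = (\<integral>\<^sup>+x. ennreal (1 / real (Suc k)) * ennreal (\<Sum>w\<in>UNIV. Q x w / (real (Suc k) * Q x w + 1)) \<partial>M)"
        by (rule nn_integral_cmult[symmetric]) measurable
      also have "\<dots> = (\<integral>\<^sup>+x. ennreal (\<Sum>w\<in>UNIV. phit (Q x w) k) \<partial>M)"
      proof (rule nn_integral_cong)
        fix x assume x: "x \<in> space M"
        have nn: "0 \<le> Q x w" for w using pv_nonneg[OF Qv[OF x]] .
        have e: "1 / real (Suc k) * (\<Sum>w\<in>UNIV. Q x w / (real (Suc k) * Q x w + 1)) = (\<Sum>w\<in>UNIV. phit (Q x w) k)"
          unfolding sum_distrib_left phit_def by (intro sum.cong) (auto simp: add.commute)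
        have S0: "0 \<le> (\<Sum>w\<in>UNIV. Q x w / (real (Suc k) * Q x w + 1))"
          using nn by (intro sum_nonneg divide_nonneg_nonneg) (auto intro: add_nonneg_nonneg)
        have m: "ennreal (1 / real (Suc k)) * ennreal (\<Sum>w\<in>UNIV. Q x w / (real (Suc k) * Q x w + 1))
            = ennreal (1 / real (Suc k) * (\<Sum>w\<in>UNIV. Q x w / (real (Suc k) * Q x w + 1)))"
          by (rule ennreal_mult[symmetric]) (simp, rule S0)
        show "ennreal (1 / real (Suc k)) * ennreal (\<Sum>w\<in>UNIV. Q x w / (real (Suc k) * Q x w + 1))
            = ennreal (\<Sum>w\<in>UNIV. phit (Q x w) k)"
          unfolding m e ..
      qed
      finally show "(\<integral>\<^sup>+x. ennreal (Z x ^ Suc k / real (Suc k)) \<partial>M) = (\<integral>\<^sup>+x. ennreal (\<Sum>w\<in>UNIV. phit (Q x w) k) \<partial>M)" .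
    qed
    also have "\<dots> = (\<integral>\<^sup>+x. (\<Sum>k. ennreal (\<Sum>w\<in>UNIV. phit (Q x w) k)) \<partial>M)"
      by (rule nn_integral_suminf[symmetric]) (unfold phit_def, measurable)
    also have "\<dots> = (\<integral>\<^sup>+x. ennreal (Phi (Q x)) \<partial>M)"
    proof (rule nn_integral_cong)
      fix x assume x: "x \<in> space M"
      show "(\<Sum>k. ennreal (\<Sum>w\<in>UNIV. phit (Q x w) k)) = ennreal (Phi (Q x))"
        by (rule suminf_ennreal_eq[OF _ Phi_sums[OF Qv[OF x]]])
           (intro sum_nonneg phit_nonneg pv_nonneg[OF Qv[OF x]])
    qed
    finally show ?thesis .
  qed
  have hm[measurable]: "(\<lambda>x. h_ars (X x)) \<in> borel_measurable M" unfolding h_ars_def by measurable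
  have hnn: "AE x in M. 0 \<le> h_ars (X x)"
    using AE01 by eventually_elim (auto simp: h_ars_def)
  have int1E: "integrable M (\<lambda>x. 1 + C * Ent (Q x))" for C
    using intE by auto
  have intEq: "(\<integral>x. 1 + C * Ent (Q x) \<partial>M) = 1 + C * (\<integral>x. Ent (Q x) \<partial>M)" for C
    using intE by (simp add: prob_space)
  have Epos: "0 \<le> (\<integral>x. Ent (Q x) \<partial>M)"
    by (rule integral_nonneg_AE, rule AE_I2) (use Entnn in auto)
  have nnE: "AE x in M. 0 \<le> 1 + C * Ent (Q x)" if "C \<ge> 0" for C
    by (rule AE_I2) (use Entnn that in auto)
  have up: "(\<integral>\<^sup>+x. ennreal (Phi (Q x)) \<partial>M) \<le> ennreal (1 + (\<integral>x. Ent (Q x) \<partial>M))"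
  proof -
    have "(\<integral>\<^sup>+x. ennreal (Phi (Q x)) \<partial>M) \<le> (\<integral>\<^sup>+x. ennreal (1 + 1 * Ent (Q x)) \<partial>M)"
      by (intro nn_integral_mono ennreal_leI) (use Phi_bounds(2)[OF Qv] in simp)
    also have "\<dots> = ennreal (\<integral>x. 1 + 1 * Ent (Q x) \<partial>M)"
      by (rule nn_integral_eq_integral[OF int1E nnE]) simp
    finally show ?thesis unfolding intEq by simp
  qed
  have lo: "ennreal (1 + cc * (\<integral>x. Ent (Q x) \<partial>M)) \<le> (\<integral>\<^sup>+x. ennreal (Phi (Q x)) \<partial>M)"
  proof -
    have "ennreal (1 + cc * (\<integral>x. Ent (Q x) \<partial>M)) = (\<integral>\<^sup>+x. ennreal (1 + cc * Ent (Q x)) \<partial>M)"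
      unfolding intEq[symmetric] by (rule nn_integral_eq_integral[OF int1E nnE, symmetric]) (rule cc_pos)
    also have "\<dots> \<le> (\<integral>\<^sup>+x. ennreal (Phi (Q x)) \<partial>M)"
      by (intro nn_integral_mono ennreal_leI) (use Phi_bounds(1)[OF Qv] in simp)
    finally show ?thesis .
  qed
  have fin: "(\<integral>\<^sup>+x. ennreal (h_ars (X x)) \<partial>M) < \<infinity>"
    using hsum up by (simp add: le_less_trans[OF _ ennreal_less_top])
  show int: "integrable M (\<lambda>x. h_ars (X x))" by (rule integrableI_nonneg[OF hm hnn fin])
  have eq: "(\<integral>\<^sup>+x. ennreal (h_ars (X x)) \<partial>M) = ennreal (\<integral>x. h_ars (X x) \<partial>M)"
    by (rule nn_integral_eq_integral[OF int hnn])
  have hpos: "0 \<le> (\<integral>x. h_ars (X x) \<partial>M)" by (rule integral_nonneg_AE[OF hnn])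
  show "(\<integral>x. h_ars (X x) \<partial>M) \<le> 1 + (\<integral>x. Ent (Q x) \<partial>M)"
  proof -
    have a: "ennreal (\<integral>x. h_ars (X x) \<partial>M) \<le> ennreal (1 + (\<integral>x. Ent (Q x) \<partial>M))"
      using up unfolding hsum[symmetric] eq .
    show ?thesis by (rule ennreal_le_iff[THEN iffD1, rotated, OF a]) (use Epos in linarith)
  qed
  show "1 + cc * (\<integral>x. Ent (Q x) \<partial>M) \<le> (\<integral>x. h_ars (X x) \<partial>M)"
  proof -
    have a: "ennreal (1 + cc * (\<integral>x. Ent (Q x) \<partial>M)) \<le> ennreal (\<integral>x. h_ars (X x) \<partial>M)"
      using lo unfolding hsum[symmetric] eq .
    show ?thesis by (rule ennreal_le_iff[THEN iffD1, rotated, OF a]) (rule hpos)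
  qed
qed



theorem propositionA1:
  fixes M :: "'a measure"
    and P :: "nat \<Rightarrow> 'a \<Rightarrow> ('w::finite \<Rightarrow> real)"
    and Y :: "nat \<Rightarrow> 'a \<Rightarrow> real"
    and n :: nat
  assumes "prob_space M"
    and P_meas: "\<And>t. t \<in> {1..n} \<Longrightarrow> P t \<in> M \<rightarrow>\<^sub>M (\<Pi>\<^sub>M w\<in>UNIV. borel)"
    and P_vec: "\<And>t x. t \<in> {1..n} \<Longrightarrow> x \<in> space M \<Longrightarrow> prob_vector (P t x)"
    and Y_meas: "\<And>t. t \<in> {1..n} \<Longrightarrow> Y t \<in> borel_measurable M"
    and Y_cond: "\<And>t A B. t \<in> {1..n} \<Longrightarrow> A \<in> sets borel \<Longrightarrow>
                   B \<in> sets (\<Pi>\<^sub>M w\<in>UNIV. borel) \<Longrightarrow>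
                   measure M {x \<in> space M. Y t x \<in> A \<and> P t x \<in> B}
                     = (\<integral>x. indicator B (P t x) * measure (mu1 (P t x)) A \<partial>M)"
  shows "real n + (\<Sum>t=1..n. (\<integral>x. Ent (P t x) \<partial>M))
           \<ge> (\<integral>x. (\<Sum>t=1..n. h_ars (Y t x)) \<partial>M)
         \<and> (\<integral>x. (\<Sum>t=1..n. h_ars (Y t x)) \<partial>M)
           \<ge> real n + (pi\<^sup>2 / 6 - 1) * (\<Sum>t=1..n. (\<integral>x. Ent (P t x) \<partial>M))"
proof -
  have S: "integrable M (\<lambda>x. h_ars (Y t x))
      \<and> (\<integral>x. h_ars (Y t x) \<partial>M) \<le> 1 + (\<integral>x. Ent (P t x) \<partial>M)
      \<and> 1 + cc * (\<integral>x. Ent (P t x) \<partial>M) \<le> (\<integral>x. h_ars (Y t x) \<partial>M)" if t: "t \<in> {1..n}" for t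
  proof -
    have cond: "measure M {x \<in> space M. Y t x \<in> A} = (\<integral>x. measure (mu1 (P t x)) A \<partial>M)"
      if A: "A \<in> sets borel" for A
    proof -
      have sp: "P t x \<in> space (\<Pi>\<^sub>M w\<in>UNIV. borel)" if "x \<in> space M" for x
        using measurable_space[OF P_meas[OF t] that] .
      have "measure M {x \<in> space M. Y t x \<in> A \<and> P t x \<in> space (\<Pi>\<^sub>M w\<in>UNIV. borel)}
          = (\<integral>x. indicator (space (\<Pi>\<^sub>M w\<in>UNIV. borel)) (P t x) * measure (mu1 (P t x)) A \<partial>M)"
        by (rule Y_cond[OF t A sets.top])
      moreover have "{x \<in> space M. Y t x \<in> A \<and> P t x \<in> space (\<Pi>\<^sub>M w\<in>UNIV. borel)} = {x \<in> space M. Y t x \<in> A}"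
        using sp by auto
      moreover have "(\<integral>x. indicator (space (\<Pi>\<^sub>M w\<in>UNIV. borel)) (P t x) * measure (mu1 (P t x)) A \<partial>M)
          = (\<integral>x. measure (mu1 (P t x)) A \<partial>M)"
        by (rule Bochner_Integration.integral_cong[OF refl]) (simp add: sp)
      ultimately show ?thesis by simp
    qed
    note s = single[OF assms(1) P_meas[OF t] P_vec[OF t] Y_meas[OF t] cond]
    show ?thesis using s by blast
  qed
  have "(\<integral>x. (\<Sum>t=1..n. h_ars (Y t x)) \<partial>M) = (\<Sum>t=1..n. (\<integral>x. h_ars (Y t x) \<partial>M))"
    by (rule Bochner_Integration.integral_sum) (use S in blast)
  moreover have "(\<Sum>t=1..n. (\<integral>x. h_ars (Y t x) \<partial>M)) \<le> (\<Sum>t=1..n. 1 + (\<integral>x. Ent (P t x) \<partial>M))"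
    by (rule sum_mono) (use S in blast)
  moreover have "(\<Sum>t=1..n. 1 + cc * (\<integral>x. Ent (P t x) \<partial>M)) \<le> (\<Sum>t=1..n. (\<integral>x. h_ars (Y t x) \<partial>M))"
    by (rule sum_mono) (use S in blast)
  moreover have "(\<Sum>t=1..n. 1 + (\<integral>x. Ent (P t x) \<partial>M)) = real n + (\<Sum>t=1..n. (\<integral>x. Ent (P t x) \<partial>M))"
    by (simp add: sum.distrib)
  moreover have "(\<Sum>t=1..n. 1 + cc * (\<integral>x. Ent (P t x) \<partial>M)) = real n + cc * (\<Sum>t=1..n. (\<integral>x. Ent (P t x) \<partial>M))"
    by (simp add: sum.distrib sum_distrib_left)
  ultimately show ?thesis by linarith
qed

end
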